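(* Let $A$ be a set and $w\in A^*$ a word. Let $A_w$ be the set consisting of the empty word together with all words in $A^*$ that start with $w$ (i.e. have $w$ as a prefix). Then $A_w$ is a free submonoid of $A^*$ if and only if $w$ is non-overlapping.
   Context: $A^*$ is the free monoid of finite words over $A$ under concatenation; $l(x)$ denotes the length of a word $x$. A word $u$ overlaps with a word $v$ if there exist words $x,y$ with $ux=yv$ and $l(y)<l(u)$. A word $w$ is non-overlapping if it does not overlap with itself. A submonoid of $A^*$ is free if every element has a unique factorization into irreducibles (nonempty elements of the submonoid not expressible as a product of two nonempty elements of the submonoid). *)

theory Defs
  imports Main "HOL-Library.Sublist"
begin

definition overlaps :: "'a set \<Rightarrow> 'a list \<Rightarrow> 'a list \<Rightarrow> bool" where
  "overlaps A u v \<longleftrightarrow>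
     (\<exists>x \<in> lists A. \<exists>y \<in> lists A. u @ x = y @ v \<and> 0 < length y \<and> length y < length u)"

definition non_overlapping :: "'a set \<Rightarrow> 'a list \<Rightarrow> bool" where
  "non_overlapping A w \<longleftrightarrow> \<not> overlaps A w w"

definition submonoid :: "'a set \<Rightarrow> 'a list set \<Rightarrow> bool" where
  "submonoid A M \<longleftrightarrow> M \<subseteq> lists A \<and> [] \<in> M \<and> (\<forall>x\<in>M. \<forall>y\<in>M. x @ y \<in> M)"

definition irreducibles :: "'a list set \<Rightarrow> 'a list set" where
  "irreducibles M = {z \<in> M. z \<noteq> [] \<and>
      \<not> (\<exists>x\<in>M. \<exists>y\<in>M. x \<noteq> [] \<and> y \<noteq> [] \<and> z = x @ y)}"

definition free_submonoid :: "'a set \<Rightarrow> 'a list set \<Rightarrow> bool" where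
  "free_submonoid A M \<longleftrightarrow> submonoid A M \<and>
     (\<forall>z\<in>M. \<exists>!fs. set fs \<subseteq> irreducibles M \<and> concat fs = z)"

definition prefix_monoid :: "'a set \<Rightarrow> 'a list \<Rightarrow> 'a list set" where
  "prefix_monoid A w = {[]} \<union> {z \<in> lists A. prefix w z}"

end

theory Submission
  imports Defs
begin

lemma pm_mem: "z \<in> prefix_monoid A w \<longleftrightarrow> z = [] \<or> (z \<in> lists A \<and> prefix w z)"
  unfolding prefix_monoid_def by auto

lemma pm_len: "z \<in> prefix_monoid A w \<Longrightarrow> z \<noteq> [] \<Longrightarrow> length w \<le> length z"
  by (auto simp: pm_mem dest: prefix_length_le)

lemma pm_app: "x \<in> prefix_monoid A w \<Longrightarrow> y \<in> prefix_monoid A w \<Longrightarrow> x @ y \<in> prefix_monoid A w"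
  by (auto simp: pm_mem)

lemma pm_sub: "w \<in> lists A \<Longrightarrow> submonoid A (prefix_monoid A w)"
  unfolding submonoid_def by (auto simp: pm_mem intro: pm_app)

lemma concat_pm: "set fs \<subseteq> prefix_monoid A w \<Longrightarrow> concat fs \<in> prefix_monoid A w"
  by (induction fs) (auto simp: pm_mem[of "[]"] intro: pm_app)

lemma irr_sub: "irreducibles M \<subseteq> M"
  unfolding irreducibles_def by auto

lemma key_le:
  assumes no: "non_overlapping A w"
    and f: "f \<in> irreducibles (prefix_monoid A w)" and g: "g \<in> irreducibles (prefix_monoid A w)"
    and F: "F \<in> prefix_monoid A w" and G: "G \<in> prefix_monoid A w"
    and eq: "f @ F = g @ G" and le: "length f \<le> length g"
  shows "f = g"
proof (rule ccontr)
  assume ne: "f \<noteq> g"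
  let ?M = "prefix_monoid A w"
  from eq le obtain r where gr: "g = f @ r" and rF: "r @ G = F"
    by (metis append_eq_append_conv_if append_take_drop_id le)
  have rne: "r \<noteq> []" using ne gr by auto
  have fM: "f \<in> ?M" "f \<noteq> []" and gM: "g \<in> ?M" "g \<noteq> []" using f g unfolding irreducibles_def by auto
  have gred: "\<not> (\<exists>x\<in>?M. \<exists>y\<in>?M. x \<noteq> [] \<and> y \<noteq> [] \<and> g = x @ y)"
    using g unfolding irreducibles_def by auto
  have rA: "r \<in> lists A" using gM gr by (auto simp: pm_mem)
  have Fne: "F \<noteq> []" using rF rne by auto
  then have pF: "prefix w F" and FA: "F \<in> lists A" using F by (auto simp: pm_mem)
  show False
  proof (cases "G = [] \<or> length w \<le> length r")
    case True
    have "prefix w r"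
    proof (cases "G = []")
      case True then show ?thesis using pF rF by simp
    next
      case False
      then have "length w \<le> length r" using \<open>G = [] \<or> length w \<le> length r\<close> by simp
      then show ?thesis using pF rF
        by (metis prefix_append prefix_length_prefix prefix_order.order_refl)
    qed
    then have "r \<in> ?M" using rA by (simp add: pm_mem)
    then show False using gred fM gr rne by blast
  next
    case False
    then have Gne: "G \<noteq> []" and rl: "length r < length w" by auto
    then have "prefix w G" using G by (auto simp: pm_mem)
    then obtain G' where G': "G = w @ G'" by (auto simp: prefix_def)
    from pF obtain F' where F': "F = w @ F'" by (auto simp: prefix_def)
    have F'A: "F' \<in> lists A" using FA F' by simp
    have e: "r @ w @ G' = w @ F'" using rF G' F' by simp
    have "take (length r + length w) (r @ w @ G') = take (length r + length w) (w @ F')"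
      using e by simp
    then have "w @ take (length r) F' = r @ w" by simp
    moreover have "take (length r) F' \<in> lists A" using F'A
      by (auto dest: in_set_takeD)
    ultimately have "overlaps A w w" unfolding overlaps_def using rA rne rl
      by (intro bexI[of _ "take (length r) F'"] bexI[of _ r]) auto
    then show False using no unfolding non_overlapping_def by simp
  qed
qed

lemma key:
  assumes no: "non_overlapping A w"
    and f: "f \<in> irreducibles (prefix_monoid A w)" and g: "g \<in> irreducibles (prefix_monoid A w)"
    and F: "F \<in> prefix_monoid A w" and G: "G \<in> prefix_monoid A w"
    and eq: "f @ F = g @ G"
  shows "f = g"
proof (cases "length f \<le> length g")
  case True then show ?thesis using key_le[OF no f g F G eq] by simp
next
  case False then show ?thesis using key_le[OF no g f G F eq[symmetric]] by simp
qed

lemma uniq: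
  assumes no: "non_overlapping A w"
  shows "set fs \<subseteq> irreducibles (prefix_monoid A w) \<Longrightarrow> set gs \<subseteq> irreducibles (prefix_monoid A w)
    \<Longrightarrow> concat fs = concat gs \<Longrightarrow> fs = gs"
proof (induction fs arbitrary: gs)
  case Nil
  then show ?case unfolding irreducibles_def by (cases gs) auto
next
  case (Cons f fs)
  then have fne: "f \<noteq> []" unfolding irreducibles_def by auto
  then obtain g gs' where gs: "gs = g # gs'" using Cons.prems by (cases gs) auto
  have M1: "concat fs \<in> prefix_monoid A w"
    using Cons.prems(1) irr_sub by (intro concat_pm) fastforce
  have M2: "concat gs' \<in> prefix_monoid A w"
    using Cons.prems(2) irr_sub gs by (intro concat_pm) fastforce
  have "f = g" using key[OF no _ _ M1 M2] Cons.prems gs by auto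
  then show ?case using Cons gs by auto
qed

lemma exist:
  assumes "z \<in> prefix_monoid A w"
  shows "\<exists>fs. set fs \<subseteq> irreducibles (prefix_monoid A w) \<and> concat fs = z"
  using assms
proof (induction "length z" arbitrary: z rule: less_induct)
  case less
  show ?case
  proof (cases "z = [] \<or> z \<in> irreducibles (prefix_monoid A w)")
    case True
    then show ?thesis by (metis concat.simps empty_subsetI list.set(1) list.set(2) insert_subsetI append_Nil2 concat.simps(2))
  next
    case False
    then obtain x y where xy: "x \<in> prefix_monoid A w" "y \<in> prefix_monoid A w" "x \<noteq> []" "y \<noteq> []" "z = x @ y"
      using less.prems unfolding irreducibles_def by auto
    obtain fx where "set fx \<subseteq> irreducibles (prefix_monoid A w)" "concat fx = x"
      using less.hyps[of x] xy by auto
    moreover obtain fy where "set fy \<subseteq> irreducibles (prefix_monoid A w)" "concat fy = y"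
      using less.hyps[of y] xy by auto
    ultimately show ?thesis using xy by (intro exI[of _ "fx @ fy"]) auto
  qed
qed

lemma short_irr:
  assumes "z \<in> lists A" "prefix w z" "w \<noteq> []" "length z < 2 * length w"
  shows "z \<in> irreducibles (prefix_monoid A w)"
proof -
  have "\<not> (x \<in> prefix_monoid A w \<and> y \<in> prefix_monoid A w \<and> x \<noteq> [] \<and> y \<noteq> [] \<and> z = x @ y)" for x y
  proof
    assume h: "x \<in> prefix_monoid A w \<and> y \<in> prefix_monoid A w \<and> x \<noteq> [] \<and> y \<noteq> [] \<and> z = x @ y"
    then have "length w \<le> length x" "length w \<le> length y" using pm_len by blast+
    then show False using h assms by simp
  qed
  then have nr: "\<not> (\<exists>x\<in>prefix_monoid A w. \<exists>y\<in>prefix_monoid A w. x \<noteq> [] \<and> y \<noteq> [] \<and> z = x @ y)" by blast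
  have "z \<in> prefix_monoid A w" "z \<noteq> []" using assms by (auto simp: pm_mem)
  with nr show ?thesis unfolding irreducibles_def by blast
qed

theorem lemma4:
  fixes A :: "'a set" and w :: "'a list"
  assumes "w \<in> lists A"
  shows "free_submonoid A (prefix_monoid A w) \<longleftrightarrow> non_overlapping A w"
proof
  assume fr: "free_submonoid A (prefix_monoid A w)"
  show "non_overlapping A w"
  proof (rule ccontr)
    assume "\<not> non_overlapping A w"
    then obtain x y where xy: "x \<in> lists A" "y \<in> lists A" "w @ x = y @ w" "0 < length y" "length y < length w"
      unfolding non_overlapping_def overlaps_def by auto
    have lx: "length x = length y" using arg_cong[OF xy(3), of length] by simp
    have wne: "w \<noteq> []" using xy by auto
    have i1: "w @ y \<in> irreducibles (prefix_monoid A w)"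
      using xy assms wne by (intro short_irr) auto
    have i2: "w @ x \<in> irreducibles (prefix_monoid A w)"
      using xy(1,2,4,5) assms wne lx by (intro short_irr) auto
    have i3: "w \<in> irreducibles (prefix_monoid A w)"
      using assms wne by (intro short_irr) auto
    let ?z = "w @ y @ w"
    have zM: "?z \<in> prefix_monoid A w" using xy assms by (auto simp: pm_mem)
    have "\<exists>!fs. set fs \<subseteq> irreducibles (prefix_monoid A w) \<and> concat fs = ?z"
      using fr zM unfolding free_submonoid_def by blast
    moreover have "set [w @ y, w] \<subseteq> irreducibles (prefix_monoid A w) \<and> concat [w @ y, w] = ?z"
      using i1 i3 by simp
    moreover have "set [w, w @ x] \<subseteq> irreducibles (prefix_monoid A w) \<and> concat [w, w @ x] = ?z"
      using i2 i3 xy(3) by simp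
    ultimately have "[w @ y, w] = [w, w @ x]" by blast
    then show False using xy by simp
  qed
next
  assume no: "non_overlapping A w"
  show "free_submonoid A (prefix_monoid A w)"
    unfolding free_submonoid_def
  proof (intro conjI ballI)
    show "submonoid A (prefix_monoid A w)" using pm_sub[OF assms] .
    fix z assume "z \<in> prefix_monoid A w"
    then show "\<exists>!fs. set fs \<subseteq> irreducibles (prefix_monoid A w) \<and> concat fs = z"
      using exist uniq[OF no] by metis
  qed
qed

end
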